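(* Let $S$ be an abelian surface over $\mathbb{F}_q$ isogenous to $E_1\times E_2$, where $E_1,E_2$ are ordinary elliptic curves over $\mathbb{F}_q$ that are isogenous over $\overline{\mathbb{F}}_q$. Let $m$ be the smallest positive integer such that $E_1$ and $E_2$ are isogenous over $\mathbb{F}_{q^m}$. Then $m\in\{1,2,3,4,6\}$, $S$ has angle rank $1$, and $\mathrm{SF}(S)\cong\mathrm{U}(1)\times C_m$.
   Context: Let $q=p^d$ with $p$ prime. For an abelian variety $A$ of dimension $g$ over $\mathbb{F}_q$, let $P_A(T)$ be the characteristic polynomial of Frobenius (on an $\ell$-adic Tate module); its roots, with multiplicity, are $\alpha_1,\dots,\alpha_g,\bar\alpha_1,\dots,\bar\alpha_g$ with $|\alpha_j|=\sqrt q$; put $u_j=\alpha_j/\sqrt q\in\mathrm{U}(1)$. The Serre–Frobenius group $\mathrm{SF}(A)$ is the closure in $\mathrm{U}(1)^g$ of the subgroup generated by $(u_1,\dots,u_g)$. The angle rank is the rank of the subgroup of $\mathbb{C}^\times$ generated by $u_1,\dots,u_g$. $C_m$ is the cyclic group of order $m$. An elliptic curve with Frobenius polynomial $T^2-aT+q$ is ordinary if $p\nmid a$. *)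

theory Defs
  imports "HOL-Analysis.Analysis" "HOL-Computational_Algebra.Polynomial"
begin

definition frob_poly :: "int \<Rightarrow> nat \<Rightarrow> int poly" where
  "frob_poly a q = [:int q, - a, 1:]"

text \<open>Characteristic polynomial of Frobenius over F_(q^n) of an elliptic curve
  whose Frobenius eigenvalues over F_q are alpha and its conjugate.
  By Tate's theorem two elliptic curves are isogenous over F_(q^n) iff these agree.\<close>
definition frob_poly_ext :: "complex \<Rightarrow> nat \<Rightarrow> complex poly" where
  "frob_poly_ext \<alpha> n = [:- (\<alpha> ^ n), 1:] * [:- (cnj \<alpha> ^ n), 1:]"

definition isogenous_over_ext :: "complex \<Rightarrow> complex \<Rightarrow> nat \<Rightarrow> bool" where
  "isogenous_over_ext \<alpha>1 \<alpha>2 n \<longleftrightarrow> frob_poly_ext \<alpha>1 n = frob_poly_ext \<alpha>2 n"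

text \<open>Serre--Frobenius group of a surface with normalized eigenvalues (u1,u2):
  closure in U(1)^2 (inside complex x complex, product topology) of the subgroup generated.\<close>
definition SF2 :: "complex \<Rightarrow> complex \<Rightarrow> (complex \<times> complex) set" where
  "SF2 u1 u2 = closure {(u1 powi k, u2 powi k) | k :: int. True}"

definition gen_mult_group :: "complex list \<Rightarrow> complex set" where
  "gen_mult_group us = {(\<Prod>i<length us. (us ! i) powi (k i)) | k :: nat \<Rightarrow> int. True}"

definition mult_indep :: "complex list \<Rightarrow> bool" where
  "mult_indep xs \<longleftrightarrow> (\<forall>k :: nat \<Rightarrow> int.
      (\<Prod>i<length xs. (xs ! i) powi (k i)) = 1 \<longrightarrow> (\<forall>i<length xs. k i = 0))"

definition has_rank :: "complex set \<Rightarrow> nat \<Rightarrow> bool" where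
  "has_rank G r \<longleftrightarrow>
     (\<exists>xs. length xs = r \<and> set xs \<subseteq> G \<and> mult_indep xs) \<and>
     \<not> (\<exists>xs. length xs = Suc r \<and> set xs \<subseteq> G \<and> mult_indep xs)"

definition angle_rank_is :: "complex list \<Rightarrow> nat \<Rightarrow> bool" where
  "angle_rank_is us r \<longleftrightarrow> has_rank (gen_mult_group us) r"

text \<open>U(1) x C_m realised inside complex x complex (C_m = m-th roots of unity).\<close>
definition U1_times_C :: "nat \<Rightarrow> (complex \<times> complex) set" where
  "U1_times_C m = {(z, w). cmod z = 1 \<and> w ^ m = 1}"

definition pmul :: "complex \<times> complex \<Rightarrow> complex \<times> complex \<Rightarrow> complex \<times> complex" where
  "pmul x y = (fst x * fst y, snd x * snd y)"

definition top_group_iso :: "(complex \<times> complex) set \<Rightarrow> (complex \<times> complex) set \<Rightarrow> bool" where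
  "top_group_iso A B \<longleftrightarrow> (\<exists>f g. homeomorphism A B f g \<and>
      (\<forall>x\<in>A. \<forall>y\<in>A. f (pmul x y) = pmul (f x) (f y)))"

end

theory Submission
  imports Defs "HOL-Computational_Algebra.Primes"
begin

lemma cseq_int:
  fixes \<zeta> :: complex and u v :: int
  assumes zz: "\<zeta> * cnj \<zeta> = 1" and c1: "(\<zeta> + cnj \<zeta>) * of_int v = of_int u"
  shows "k \<ge> 1 \<Longrightarrow> (\<exists>z::int. (\<zeta>^k + cnj \<zeta>^k) * of_int v ^ k = of_int z \<and> v dvd z - u^k)
        \<and> (\<exists>z::int. (\<zeta>^(k+1) + cnj \<zeta>^(k+1)) * of_int v ^ (k+1) = of_int z \<and> v dvd z - u^(k+1))"
proof (induction k rule: nat_induct_at_least)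
  case base
  have e2: "(\<zeta>^2 + cnj \<zeta>^2) * (of_int v) ^ 2 = of_int (u ^ 2 - 2 * v ^ 2)"
  proof -
    have "(\<zeta>^2 + cnj \<zeta>^2) = (\<zeta> + cnj \<zeta>)^2 - 2" using zz by (simp add: power2_eq_square algebra_simps)
    hence "(\<zeta>^2 + cnj \<zeta>^2) * of_int v ^ 2 = ((\<zeta> + cnj \<zeta>) * of_int v)^2 - 2 * of_int v^2"
      by (simp add: power2_eq_square algebra_simps)
    also have "\<dots> = of_int (u ^ 2 - 2 * v ^ 2)" using c1 by simp
    finally show ?thesis .
  qed
  have "v dvd (u ^ 2 - 2 * v ^ 2) - u ^ 2"
    by (simp add: power2_eq_square)
  then have "\<exists>z::int. (\<zeta>^2 + cnj \<zeta>^2) * (of_int v) ^ 2 = of_int z \<and> v dvd z - u ^ 2"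
    using e2 by blast
  moreover have "\<exists>z::int. (\<zeta>^1 + cnj \<zeta>^1) * (of_int v) ^ 1 = of_int z \<and> v dvd z - u ^ 1"
    using c1 by (intro exI[of _ u]) simp
  ultimately show ?case by (simp add: numeral_2_eq_2)
next
  case (Suc k)
  then obtain z0 z1 where h0: "(\<zeta>^k + cnj \<zeta>^k) * of_int v ^ k = of_int z0" "v dvd z0 - u^k"
     and h1: "(\<zeta>^(k+1) + cnj \<zeta>^(k+1)) * of_int v ^ (k+1) = of_int z1" "v dvd z1 - u^(k+1)"
    by blast
  have rec: "\<zeta>^(k+2) + cnj \<zeta>^(k+2) = (\<zeta> + cnj \<zeta>) * (\<zeta>^(k+1) + cnj \<zeta>^(k+1)) - (\<zeta> * cnj \<zeta>) * (\<zeta>^k + cnj \<zeta>^k)"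
    by (simp add: algebra_simps power_add power2_eq_square)
  have "(\<zeta>^(k+2) + cnj \<zeta>^(k+2)) * of_int v ^ (k+2)
     = ((\<zeta> + cnj \<zeta>) * of_int v) * ((\<zeta>^(k+1) + cnj \<zeta>^(k+1)) * of_int v ^ (k+1)) - of_int v ^ 2 * ((\<zeta>^k + cnj \<zeta>^k) * of_int v ^ k)"
    unfolding rec zz by (simp add: algebra_simps power_add power2_eq_square)
  also have "\<dots> = of_int (u * z1 - v^2 * z0)" using c1 h0 h1 by simp
  finally have e: "(\<zeta>^(k+2) + cnj \<zeta>^(k+2)) * of_int v ^ (k+2) = of_int (u * z1 - v^2 * z0)" .
  have "(u * z1 - v^2 * z0) - u^(Suc k + 1) = u * (z1 - u^(k+1)) - v * (v * z0)"
    by (simp add: algebra_simps power2_eq_square)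
  hence "v dvd (u * z1 - v^2 * z0) - u^(Suc k + 1)" using h1(2) by simp
  hence "\<exists>z::int. (\<zeta>^(Suc k + 1) + cnj \<zeta>^(Suc k + 1)) * of_int v ^ (Suc k + 1) = of_int z \<and> v dvd z - u ^ (Suc k + 1)"
    using e by (intro exI[of _ "u * z1 - v^2 * z0"]) (simp add: add.commute)
  moreover have "\<exists>z::int. (\<zeta>^(Suc k) + cnj \<zeta>^(Suc k)) * of_int v ^ (Suc k) = of_int z \<and> v dvd z - u ^ (Suc k)"
    using h1 by simp
  ultimately show ?case by blast
qed

lemma root_unity_trace_dvd:
  fixes \<zeta> :: complex and u v :: int
  assumes zz: "\<zeta> * cnj \<zeta> = 1" and c1: "(\<zeta> + cnj \<zeta>) * of_int v = of_int u"
    and N: "\<zeta>^N = 1" "N > 0"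
  shows "v dvd u^N"
proof -
  obtain z where z: "(\<zeta>^N + cnj \<zeta>^N) * of_int v ^ N = of_int z" "v dvd z - u^N"
    using cseq_int[OF zz c1, of N] N by auto
  have cz: "cnj \<zeta> ^ N = 1" using N by (metis complex_cnj_one complex_cnj_power)
  hence "(of_int z :: complex) = of_int (2 * v^N)" using z N by simp
  hence "z = 2 * v^N" by (simp only: of_int_eq_iff)
  hence d1: "v dvd 2 * v^N - u^N" using z by simp
  have d2: "v dvd 2 * v^N" using N by (simp add: dvd_power)
  have "v dvd 2 * v^N - (2 * v^N - u^N)" using dvd_diff[OF d2 d1] .
  thus ?thesis by simp
qed

lemma root_unity_trace_int:
  fixes \<zeta> :: complex and U V :: int
  assumes zz: "\<zeta> * cnj \<zeta> = 1" and c1: "(\<zeta> + cnj \<zeta>) * of_int V = of_int U" and V: "V \<noteq> 0"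
    and N: "\<zeta>^N = 1" "N > 0"
  shows "\<exists>k::int. \<zeta> + cnj \<zeta> = of_int k"
proof -
  define r :: rat where "r = of_int U / of_int V"
  obtain u v where qr: "quotient_of r = (u, v)" by (cases "quotient_of r") auto
  have cop: "coprime u v" using qr by (rule quotient_of_coprime)
  have vpos: "v > 0" using qr by (rule quotient_of_denom_pos)
  have rdiv: "r = of_int u / of_int v" using qr by (rule quotient_of_div)
  have "\<zeta> + cnj \<zeta> = of_int U / of_int V" using c1 V by (simp add: field_simps)
  also have "\<dots> = of_rat r" unfolding r_def by (simp add: of_rat_divide)
  also have "\<dots> = of_int u / of_int v" unfolding rdiv by (simp add: of_rat_divide)
  finally have e: "\<zeta> + cnj \<zeta> = of_int u / of_int v" .
  hence "(\<zeta> + cnj \<zeta>) * of_int v = of_int u" using vpos by simp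
  hence "v dvd u^N" using root_unity_trace_dvd[OF zz _ N] by blast
  moreover have "coprime v (u^N)" using cop by (simp add: coprime_commute)
  ultimately have "is_unit v" by (meson coprime_absorb_right coprime_commute coprime_power_right_iff) 
  hence "v = 1" using vpos by auto
  thus ?thesis using e by auto
qed

lemma poly_frob: "poly (map_poly of_int (frob_poly a q)) (x::complex) = x^2 - of_int a * x + of_nat q"
  by (simp add: frob_poly_def map_poly_pCons power2_eq_square algebra_simps)

lemma ordinary_root:
  fixes p d q :: nat and a :: int and \<alpha> :: complex
  assumes p: "prime p" and d: "d \<ge> 1" and q: "q = p^d" and w: "a^2 \<le> 4 * int q"
    and o: "\<not> int p dvd a" and r: "poly (map_poly of_int (frob_poly a q)) \<alpha> = 0"
  shows "\<alpha> + cnj \<alpha> = of_int a \<and> \<alpha> * cnj \<alpha> = of_nat q \<and> \<alpha>^2 = of_int a * \<alpha> - of_nat q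
     \<and> (\<forall>N>0. \<alpha>^N \<noteq> cnj \<alpha>^N)"
proof -
  have pd: "int p dvd int q" using d q by (simp add: dvd_power)
  have ne: "a^2 \<noteq> 4 * int q"
  proof
    assume h: "a^2 = 4 * int q"
    hence "int p dvd a^2" using pd by simp
    hence "int p dvd a" using p prime_dvd_power[of "int p"] by simp
    thus False using o by simp
  qed
  have eq: "\<alpha>^2 - of_int a * \<alpha> + of_nat q = 0" using r poly_frob by simp
  define x where "x = Re \<alpha>"
  define y where "y = Im \<alpha>"
  have ax: "\<alpha> = Complex x y" by (simp add: x_def y_def)
  have re: "x^2 - y^2 - of_int a * x + of_nat q = 0" and im: "2*x*y - of_int a * y = 0"
    using eq unfolding ax by (simp_all add: complex_eq_iff power2_eq_square algebra_simps)
  have y0: "y \<noteq> 0"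
  proof
    assume "y = 0"
    hence "(2*x - of_int a)^2 = of_int (a^2) - 4 * of_nat q" using re by (simp add: power2_eq_square algebra_simps)
    moreover have "of_int (a^2) - 4 * of_nat q < (0::real)" using w ne
      by (metis (mono_tags, opaque_lifting) diff_less_0_iff_less le_less of_int_less_iff of_int_mult of_int_numeral of_int_of_nat_eq)
    ultimately show False by (metis not_less zero_le_power2)
  qed
  have "(2 * x - of_int a) * y = 0" using im by (simp add: algebra_simps)
  hence x2: "2 * x = of_int a" using y0 by simp
  have y2: "y^2 = x^2 - of_int a * x + of_nat q" using re by simp
  have s: "\<alpha> + cnj \<alpha> = of_int a" unfolding ax using x2 by (simp add: complex_eq_iff)
  have pr: "\<alpha> * cnj \<alpha> = of_nat q"
  proof -
    have "y^2 = of_nat q - x^2" using y2 by (simp add: x2[symmetric] power2_eq_square)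
    hence "x^2 + y^2 = of_nat q" by simp
    thus ?thesis unfolding ax by (simp add: complex_eq_iff power2_eq_square)
  qed
  have sq: "\<alpha>^2 = of_int a * \<alpha> - of_nat q" using eq by (simp add: algebra_simps)
  have nr: "\<alpha>^N \<noteq> cnj \<alpha>^N" if N: "N > 0" for N
  proof
    assume h: "\<alpha>^N = cnj \<alpha>^N"
    have q0: "(of_nat q :: complex) \<noteq> 0" using q p by (simp add: prime_gt_0_nat)
    define z where "z = \<alpha>^2 / of_nat q"
    have cz: "cnj z = cnj \<alpha>^2 / of_nat q" unfolding z_def by simp
    have zz: "z * cnj z = 1" unfolding cz z_def using q0 pr
      by (simp add: field_simps power2_eq_square)
    have tr: "(z + cnj z) * of_int (int q) = of_int (a^2 - 2 * int q)"
    proof -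
      have "(z + cnj z) * of_int (int q) = \<alpha>^2 + cnj \<alpha>^2" unfolding cz z_def using q0 by (simp add: field_simps)
      also have "\<dots> = (\<alpha> + cnj \<alpha>)^2 - 2 * (\<alpha> * cnj \<alpha>)" by (simp add: power2_eq_square algebra_simps)
      also have "\<dots> = of_int (a^2 - 2 * int q)" unfolding s pr by simp
      finally show ?thesis .
    qed
    have zN: "z^N = 1"
    proof -
      have "(of_nat q :: complex)^N = \<alpha>^N * cnj \<alpha>^N" unfolding pr[symmetric] by (simp add: power_mult_distrib)
      also have "\<dots> = (\<alpha>^N)^2" using h by (simp add: power2_eq_square)
      finally have "(of_nat q :: complex)^N = \<alpha>^(2*N)" by (metis power_mult power_mult_distrib mult.commute)
      moreover have "\<alpha> \<noteq> 0" using pr q0 by auto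
      ultimately show ?thesis unfolding z_def using q0 by (simp add: power_divide power_mult)
    qed
    have "int q dvd (a^2 - 2 * int q)^N" using root_unity_trace_dvd[OF zz tr zN N] .
    hence "int p dvd (a^2 - 2 * int q)^N" using pd dvd_trans by blast
    hence "int p dvd a^2 - 2 * int q" using p prime_dvd_power[of "int p"] by simp
    hence "int p dvd a^2" using pd by (metis dvd_add_left_iff diff_add_cancel dvd_mult)
    hence "int p dvd a" using p prime_dvd_power[of "int p"] by simp
    thus False using o by simp
  qed
  show ?thesis using s pr sq nr by blast
qed

lemma order_4_6:
  fixes \<zeta> :: complex and k :: int
  assumes zz: "\<zeta> * cnj \<zeta> = 1" and t: "\<zeta> + cnj \<zeta> = of_int k"
  shows "\<zeta>^4 = 1 \<or> \<zeta>^6 = 1"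
proof -
  have "cmod \<zeta> ^ 2 = 1" using zz by (metis complex_norm_square norm_one of_real_eq_1_iff)
  hence n1: "cmod \<zeta> = 1" by (simp add: power2_eq_1_iff) (smt (verit) norm_ge_zero)
  have "\<bar>real_of_int k\<bar> = cmod (\<zeta> + cnj \<zeta>)" using t by (metis norm_of_int)
  also have "\<dots> \<le> cmod \<zeta> + cmod (cnj \<zeta>)" by (rule norm_triangle_ineq)
  also have "\<dots> = 2" using n1 by simp
  finally have "\<bar>k\<bar> \<le> 2" by linarith
  hence kc: "k = -2 \<or> k = -1 \<or> k = 0 \<or> k = 1 \<or> k = 2" by linarith
  have q: "\<zeta>^2 = of_int k * \<zeta> - 1"
    unfolding t[symmetric] using zz by (simp add: power2_eq_square algebra_simps)
  have p4: "\<zeta>^4 = (\<zeta>^2)^2" and p6: "\<zeta>^6 = (\<zeta>^2 * \<zeta>)^2" 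
    by (simp_all add: power_mult[symmetric] power_mult_distrib power_add[symmetric])
  have "\<zeta>^2 * \<zeta> = (of_int k * \<zeta> - 1) * \<zeta>" using q by simp
  also have "\<dots> = of_int k * \<zeta>^2 - \<zeta>" by (simp add: power2_eq_square algebra_simps)
  also have "\<dots> = of_int k * (of_int k * \<zeta> - 1) - \<zeta>" using q by simp
  finally have p3: "\<zeta>^2 * \<zeta> = of_int k * (of_int k * \<zeta> - 1) - \<zeta>" .
  show ?thesis using kc
  proof (elim disjE)
    assume "k = -2"
    hence "\<zeta>^2 = -2 * \<zeta> - 1" using q by simp
    moreover have "(\<zeta> + 1)^2 = \<zeta>^2 + 2 * \<zeta> + 1" by (simp add: power2_eq_square algebra_simps)
    ultimately have "(\<zeta> + 1)^2 = 0" by simp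
    hence "\<zeta> = -1" by (simp add: add_eq_0_iff2)
    thus ?thesis by simp
  next
    assume "k = 2"
    hence "\<zeta>^2 = 2 * \<zeta> - 1" using q by simp
    moreover have "(\<zeta> - 1)^2 = \<zeta>^2 - 2 * \<zeta> + 1" by (simp add: power2_eq_square algebra_simps)
    ultimately have "(\<zeta> - 1)^2 = 0" by simp
    hence "\<zeta> = 1" by simp
    thus ?thesis by simp
  next
    assume "k = 0"
    hence "\<zeta>^2 = -1" using q by simp
    thus ?thesis using p4 by simp
  next
    assume "k = 1"
    hence "\<zeta>^2 * \<zeta> = -1" using p3 by simp
    thus ?thesis using p6 by simp
  next
    assume "k = -1"
    hence "\<zeta>^2 * \<zeta> = 1" using p3 by simp
    thus ?thesis using p6 by simp
  qed
qed

definition ordq :: "int \<Rightarrow> nat \<Rightarrow> complex \<Rightarrow> bool" where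
  "ordq a q \<alpha> \<longleftrightarrow> \<alpha> + cnj \<alpha> = of_int a \<and> \<alpha> * cnj \<alpha> = of_nat q \<and> \<alpha>^2 = of_int a * \<alpha> - of_nat q
     \<and> (\<forall>N>0. \<alpha>^N \<noteq> cnj \<alpha>^N)"

lemma ordq_cnj: "ordq a q \<alpha> \<Longrightarrow> ordq a q (cnj \<alpha>)"
proof -
  assume h: "ordq a q \<alpha>"
  have "cnj (\<alpha>^2) = cnj (of_int a * \<alpha> - of_nat q)" using h unfolding ordq_def by simp
  hence "cnj \<alpha> ^2 = of_int a * cnj \<alpha> - of_nat q" by simp
  moreover have "cnj \<alpha> + cnj (cnj \<alpha>) = of_int a" using h unfolding ordq_def by (simp add: add.commute)
  moreover have "cnj \<alpha> * cnj (cnj \<alpha>) = of_nat q" using h unfolding ordq_def by (simp add: mult.commute)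
  moreover have "\<forall>N>0. cnj \<alpha>^N \<noteq> cnj (cnj \<alpha>)^N" using h unfolding ordq_def by (metis complex_cnj_cnj)
  ultimately show ?thesis unfolding ordq_def by blast
qed

lemma fpe_cnj: "frob_poly_ext (cnj x) n = frob_poly_ext x n"
  unfolding frob_poly_ext_def by (simp add: mult.commute)

lemma poly_fpe: "poly (frob_poly_ext x n) y = (y - x^n) * (y - cnj x^n)"
  unfolding frob_poly_ext_def by (simp add: algebra_simps)

lemma iso_root:
  assumes "isogenous_over_ext \<alpha> \<beta> n"
  shows "\<beta>^n = \<alpha>^n \<or> \<beta>^n = cnj \<alpha>^n"
proof -
  have "poly (frob_poly_ext \<alpha> n) (\<beta>^n) = poly (frob_poly_ext \<beta> n) (\<beta>^n)"
    using assms unfolding isogenous_over_ext_def by simp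
  also have "\<dots> = 0" by (simp add: poly_fpe)
  finally show ?thesis by (simp add: poly_fpe)
qed

lemma root_iso:
  assumes "\<beta>^n = \<gamma>^n" "\<gamma> = \<alpha> \<or> \<gamma> = cnj \<alpha>"
  shows "isogenous_over_ext \<alpha> \<beta> n"
proof -
  have "frob_poly_ext \<beta> n = frob_poly_ext \<gamma> n"
  proof -
    have "cnj \<beta> ^ n = cnj \<gamma> ^ n" using assms(1) by (metis complex_cnj_power)
    thus ?thesis unfolding frob_poly_ext_def using assms(1) by simp
  qed
  also have "\<dots> = frob_poly_ext \<alpha> n" using assms(2) fpe_cnj by auto
  finally show ?thesis unfolding isogenous_over_ext_def by simp
qed

lemma pow_lin:
  fixes g h :: complex
  assumes "g^2 = of_int a * g - of_nat q" "h^2 = of_int a * h - of_nat q"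
  shows "\<exists>x y::int. g^n = of_int x + of_int y * g \<and> h^n = of_int x + of_int y * h"
proof (induction n)
  case 0
  show ?case by (intro exI[of _ 1] exI[of _ 0]) simp
next
  case (Suc n)
  then obtain x y where xy: "g^n = of_int x + of_int y * g" "h^n = of_int x + of_int y * h" by blast
  have "g^Suc n = of_int (- y * int q) + of_int (x + y * a) * g"
  proof -
    have "g^Suc n = of_int x * g + of_int y * g^2" using xy by (simp add: power2_eq_square algebra_simps)
    also have "\<dots> = of_int x * g + of_int y * (of_int a * g - of_nat q)" using assms(1) by simp
    also have "\<dots> = of_int (- y * int q) + of_int (x + y * a) * g" by (simp add: algebra_simps)
    finally show ?thesis .
  qed
  moreover have "h^Suc n = of_int (- y * int q) + of_int (x + y * a) * h"
  proof -
    have "h^Suc n = of_int x * h + of_int y * h^2" using xy by (simp add: power2_eq_square algebra_simps)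
    also have "\<dots> = of_int x * h + of_int y * (of_int a * h - of_nat q)" using assms(2) by simp
    also have "\<dots> = of_int (- y * int q) + of_int (x + y * a) * h" by (simp add: algebra_simps)
    finally show ?thesis .
  qed
  ultimately show ?case by blast
qed

lemma dvd_from_min:
  fixes \<zeta> :: complex
  assumes "\<zeta>^m = 1" "m > 0" "\<forall>n. 0 < n \<and> n < m \<longrightarrow> \<zeta>^n \<noteq> 1" "\<zeta>^n = 1"
  shows "m dvd n"
proof -
  have "\<zeta>^n = \<zeta>^(n mod m) * (\<zeta>^m)^(n div m)"
    by (metis mod_div_mult_eq power_add power_mult mult.commute)
  hence z1: "\<zeta>^(n mod m) = 1" using assms by simp
  have "n mod m = 0"
  proof (rule ccontr)
    assume "n mod m \<noteq> 0"
    hence "0 < n mod m \<and> n mod m < m" using assms(2) by simp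
    thus False using assms(3) z1 by blast
  qed
  thus ?thesis by (simp add: dvd_eq_mod_eq_0)
qed

lemma core:
  fixes \<alpha> \<beta> :: complex
  assumes ha: "ordq a q \<alpha>" and hb: "ordq b q \<beta>" and q: "q > 0"
    and m: "m > 0" "isogenous_over_ext \<alpha> \<beta> m"
    and mmin: "\<forall>n. 0 < n \<and> n < m \<longrightarrow> \<not> isogenous_over_ext \<alpha> \<beta> n"
  shows "m \<in> {1,2,3,4,6} \<and> (\<exists>\<zeta> \<gamma>. (\<gamma> = \<alpha> \<or> \<gamma> = cnj \<alpha>) \<and> \<beta> = \<zeta> * \<gamma> \<and> \<zeta>^m = 1
          \<and> (\<forall>n. 0 < n \<and> n < m \<longrightarrow> \<zeta>^n \<noteq> 1))"
proof -
  obtain \<gamma> where g: "\<gamma> = \<alpha> \<or> \<gamma> = cnj \<alpha>" "\<beta>^m = \<gamma>^m" using iso_root[OF m(2)] by blast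
  have hg: "ordq a q \<gamma>" using g(1) ha ordq_cnj by blast
  have q0: "(of_nat q :: complex) \<noteq> 0" using q by simp
  have g0: "\<gamma> \<noteq> 0" using hg q0 unfolding ordq_def by auto
  define \<zeta> where "\<zeta> = \<beta> / \<gamma>"
  have bz: "\<beta> = \<zeta> * \<gamma>" unfolding \<zeta>_def using g0 by simp
  have zm: "\<zeta>^m = 1" unfolding \<zeta>_def using g g0 by (simp add: power_divide)
  have zmin: "\<forall>n. 0 < n \<and> n < m \<longrightarrow> \<zeta>^n \<noteq> 1"
  proof (intro allI impI)
    fix n assume n: "0 < n \<and> n < m"
    show "\<zeta>^n \<noteq> 1"
    proof
      assume "\<zeta>^n = 1"
      hence "\<beta>^n = \<gamma>^n" unfolding bz by (simp add: power_mult_distrib)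
      hence "isogenous_over_ext \<alpha> \<beta> n" using root_iso g(1) by blast
      thus False using mmin n by blast
    qed
  qed
  have zc: "\<zeta> = \<beta> * cnj \<gamma> / of_nat q"
    unfolding \<zeta>_def using hg g0 q0 unfolding ordq_def by (simp add: field_simps)
  have zz: "\<zeta> * cnj \<zeta> = 1"
  proof -
    have "\<zeta> * cnj \<zeta> = (\<beta> * cnj \<beta>) * (\<gamma> * cnj \<gamma>) / (of_nat q * of_nat q)"
      unfolding zc by (simp add: field_simps)
    thus ?thesis using hb hg q0 unfolding ordq_def by simp
  qed
  have hg1: "\<gamma>^2 = of_int a * \<gamma> - of_nat q" and hg2: "cnj \<gamma>^2 = of_int a * cnj \<gamma> - of_nat q"
    using hg ordq_cnj[OF hg] unfolding ordq_def by simp_all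
  have hb1: "\<beta>^2 = of_int b * \<beta> - of_nat q" and hb2: "cnj \<beta>^2 = of_int b * cnj \<beta> - of_nat q"
    using hb ordq_cnj[OF hb] unfolding ordq_def by simp_all
  obtain x y where xy: "\<gamma>^m = of_int x + of_int y * \<gamma>" "cnj \<gamma>^m = of_int x + of_int y * cnj \<gamma>"
    using pow_lin[OF hg1 hg2] by blast
  obtain x' y' where xy': "\<beta>^m = of_int x' + of_int y' * \<beta>" "cnj \<beta>^m = of_int x' + of_int y' * cnj \<beta>"
    using pow_lin[OF hb1 hb2] by blast
  have y'0: "y' \<noteq> 0"
  proof
    assume "y' = 0"
    hence "\<beta>^m = cnj \<beta>^m" using xy' by simp
    thus False using hb m unfolding ordq_def by blast
  qed
  have e0: "of_int x + of_int y * \<gamma> = of_int x' + of_int y' * \<beta>" using xy xy' g(2) by simp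
  have e1: "of_int y' * \<beta> = of_int (x - x') + of_int y * \<gamma>"
  proof -
    have "of_int y' * \<beta> = (of_int x' + of_int y' * \<beta>) - of_int x'" by simp
    also have "\<dots> = (of_int x + of_int y * \<gamma>) - of_int x'" using e0 by simp
    finally show ?thesis by simp
  qed
  have e2: "of_int y' * cnj \<beta> = of_int (x - x') + of_int y * cnj \<gamma>"
  proof -
    have "cnj \<beta>^m = cnj \<gamma>^m" using g(2) by (metis complex_cnj_power)
    hence e0': "of_int x + of_int y * cnj \<gamma> = of_int x' + of_int y' * cnj \<beta>" using xy xy' by simp
    have "of_int y' * cnj \<beta> = (of_int x' + of_int y' * cnj \<beta>) - of_int x'" by simp
    also have "\<dots> = (of_int x + of_int y * cnj \<gamma>) - of_int x'" using e0' by simp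
    finally show ?thesis by simp
  qed
  have tr: "(\<zeta> + cnj \<zeta>) * of_int (y' * int q) = of_int ((x - x') * a + 2 * y * int q)"
  proof -
    have "(\<zeta> + cnj \<zeta>) * of_int (y' * int q) = (of_int y' * \<beta>) * cnj \<gamma> + (of_int y' * cnj \<beta>) * \<gamma>"
      unfolding zc using q0 by (simp add: field_simps)
    also have "\<dots> = of_int (x - x') * (\<gamma> + cnj \<gamma>) + 2 * of_int y * (\<gamma> * cnj \<gamma>)"
      unfolding e1 e2 by (simp add: algebra_simps)
    also have "\<dots> = of_int ((x - x') * a + 2 * y * int q)" using hg unfolding ordq_def by simp
    finally show ?thesis .
  qed
  obtain k where k: "\<zeta> + cnj \<zeta> = of_int k"
    using root_unity_trace_int[OF zz tr _ zm m(1)] y'0 q by auto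
  have "\<zeta>^4 = 1 \<or> \<zeta>^6 = 1" using order_4_6[OF zz k] .
  hence "m dvd 4 \<or> m dvd 6" using dvd_from_min[OF zm m(1) zmin] by blast
  moreover have "m dvd 4 \<Longrightarrow> m \<in> {1,2,3,4,6}"
  proof -
    assume h: "m dvd 4"
    hence "m \<le> 4" by (simp add: dvd_imp_le)
    hence "m = 1 \<or> m = 2 \<or> m = 3 \<or> m = 4" using m by auto
    thus ?thesis using h by auto
  qed
  moreover have "m dvd 6 \<Longrightarrow> m \<in> {1,2,3,4,6}"
  proof -
    assume h: "m dvd 6"
    hence "m \<le> 6" by (simp add: dvd_imp_le)
    hence "m = 1 \<or> m = 2 \<or> m = 3 \<or> m = 4 \<or> m = 5 \<or> m = 6" using m by auto
    thus ?thesis using h by auto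
  qed
  ultimately show ?thesis using g(1) bz zm zmin by blast
qed

definition cc :: "real \<Rightarrow> complex" where "cc x = cis (2 * pi * x)"

lemma cc_frac: "cc x = cc (frac x)"
proof -
  have "x = frac x + of_int \<lfloor>x\<rfloor>" by (simp add: frac_def)
  hence "cc x = cis (2 * pi * frac x) * cis (2 * pi * of_int \<lfloor>x\<rfloor>)"
    unfolding cc_def by (metis cis_mult distrib_left)
  thus ?thesis unfolding cc_def by simp
qed

lemma cc_cont: "continuous (at x) cc"
proof -
  have eq: "cc = (\<lambda>x. exp (\<i> * complex_of_real (2 * pi * x)))"
    unfolding cc_def by (simp add: cis_conv_exp fun_eq_iff)
  show ?thesis unfolding eq by (intro continuous_intros)
qed

lemma unit_cc: "cmod z = 1 \<Longrightarrow> z = cc (Arg z / (2 * pi))"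
proof -
  assume h: "cmod z = 1"
  hence "z \<noteq> 0" by auto
  hence "cis (Arg z) = z" using cis_Arg[of z] h by (simp add: sgn_div_norm)
  thus ?thesis unfolding cc_def by simp
qed

lemma dense_powers:
  fixes v z :: complex
  assumes v: "cmod v = 1" "\<forall>n>0. v^n \<noteq> 1" and z: "cmod z = 1" and e: "e > 0"
  shows "\<exists>k::nat. cmod (v^k - z) < e"
proof -
  define \<theta> where "\<theta> = Arg v / (2 * pi)"
  have vc: "v = cc \<theta>" unfolding \<theta>_def using unit_cc[OF v(1)] .
  have vk: "v^k = cc (real k * \<theta>)" for k
  proof -
    have "v^k = cis (2 * pi * \<theta>) ^ k" unfolding vc cc_def ..
    also have "\<dots> = cis (real k * (2 * pi * \<theta>))" by (rule Complex.DeMoivre)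
    also have "\<dots> = cc (real k * \<theta>)" unfolding cc_def by (simp add: ac_simps)
    finally show ?thesis .
  qed
  have irr: "\<theta> \<notin> \<rat>"
  proof
    assume "\<theta> \<in> \<rat>"
    then obtain a b :: int where b: "b > 0" and ab: "\<theta> = of_int a / of_int b"
      by (metis Rats_cases')
    have "v ^ nat b = cc (real (nat b) * \<theta>)" by (rule vk)
    also have "real (nat b) * \<theta> = of_int a" using b ab by simp
    also have "cc (of_int a) = 1" unfolding cc_def by simp
    finally show False using v(2) b by simp
  qed
  define \<alpha> where "\<alpha> = frac (Arg z / (2 * pi))"
  have zc: "z = cc \<alpha>" unfolding \<alpha>_def using unit_cc[OF z] cc_frac by metis
  obtain d where d: "d > 0" "\<And>x. dist x \<alpha> < d \<Longrightarrow> dist (cc x) (cc \<alpha>) < e"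
    using cc_cont[of \<alpha>] e unfolding continuous_at_eps_delta by blast
  have a01: "0 \<le> \<alpha>" "\<alpha> \<le> 1" unfolding \<alpha>_def by (auto simp: frac_lt_1 less_imp_le)
  obtain k where k: "k > 0" "\<bar>frac (real k * \<theta>) - \<alpha>\<bar> < d"
    using Kronecker_approx_1_explicit[OF irr a01 d(1)] by blast
  have "dist (cc (frac (real k * \<theta>))) (cc \<alpha>) < e" using d(2) k(2) by (simp add: dist_real_def)
  hence "cmod (v^k - z) < e" unfolding vk zc cc_frac[of "real k * \<theta>"] by (simp add: dist_norm)
  thus ?thesis by blast
qed

lemma roots_eq:
  fixes \<zeta> :: complex
  assumes z: "\<zeta>^m = 1" "m > 0" "\<forall>n. 0 < n \<and> n < m \<longrightarrow> \<zeta>^n \<noteq> 1"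
  shows "{w. w^m = 1} = (\<lambda>j. \<zeta>^j) ` {..<m}"
proof -
  have z0: "\<zeta> \<noteq> 0" using z by (metis power_0_left zero_neq_one gr_implies_not0)
  have inj: "inj_on (\<lambda>j. \<zeta>^j) {..<m}"
  proof (rule inj_onI)
    fix i j assume ij: "i \<in> {..<m}" "j \<in> {..<m}" "\<zeta>^i = \<zeta>^j"
    show "i = j"
    proof (rule ccontr)
      assume "i \<noteq> j"
      then consider "i < j" | "j < i" by linarith
      thus False
      proof cases
        case 1
        hence "\<zeta>^j = \<zeta>^i * \<zeta>^(j - i)" by (simp add: power_add[symmetric])
        hence "\<zeta>^(j-i) = 1" using ij z0 by simp
        thus False using z(3) 1 ij by auto
      next
        case 2
        hence "\<zeta>^i = \<zeta>^j * \<zeta>^(i - j)" by (simp add: power_add[symmetric])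
        hence "\<zeta>^(i-j) = 1" using ij z0 by simp
        thus False using z(3) 2 ij by auto
      qed
    qed
  qed
  have sub: "(\<lambda>j. \<zeta>^j) ` {..<m} \<subseteq> {w. w^m = 1}"
  proof
    fix w assume "w \<in> (\<lambda>j. \<zeta>^j) ` {..<m}"
    then obtain j where "w = \<zeta>^j" by blast
    hence "w^m = (\<zeta>^m)^j" by (simp add: power_mult[symmetric] mult.commute)
    thus "w \<in> {w. w^m = 1}" using z(1) by simp
  qed
  have fin: "finite {w::complex. w^m = 1}" using finite_roots_unity[of m] z(2) by simp
  have c1: "card {w::complex. w^m = 1} \<le> m" using card_roots_unity[of m] z(2) by simp
  have c2: "card ((\<lambda>j. \<zeta>^j) ` {..<m}) = m" using card_image[OF inj] by simp
  have "(\<lambda>j. \<zeta>^j) ` {..<m} = {w. w^m = 1}"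
    by (rule card_seteq[OF fin sub]) (use c1 c2 in linarith)
  thus ?thesis by simp
qed

lemma cnj_inv: "cmod x = 1 \<Longrightarrow> cnj x = inverse x"
proof -
  assume h: "cmod x = 1"
  have "x * cnj x = 1" using complex_norm_square[of x] h by simp
  thus ?thesis by (metis inverse_unique)
qed

lemma T_props:
  assumes T: "T = (\<lambda>z. z) \<or> T = cnj"
  shows "\<And>x y. T (x * y) = T x * T y" "\<And>x. cmod (T x) = cmod x" "\<And>x k. T (x powi k) = T x powi k"
        "\<And>x y. T x - T y = T (x - y)" "\<And>x. cnj (T x) * T x = x * cnj x" "continuous_on S T"
        "\<And>x. cmod x = 1 \<Longrightarrow> T x = x powi (if T = cnj then -1 else 1)"
proof -
  show "\<And>x y. T (x * y) = T x * T y" using T by auto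
  show "\<And>x. cmod (T x) = cmod x" using T by auto
  show "\<And>x k. T (x powi k) = T x powi k" using T by auto
  show "\<And>x y. T x - T y = T (x - y)" using T by auto
  show "\<And>x. cnj (T x) * T x = x * cnj x" using T by (auto simp: mult.commute)
  show "continuous_on S T" using T by (auto intro: continuous_intros)
  show "\<And>x. cmod x = 1 \<Longrightarrow> T x = x powi (if T = cnj then -1 else 1)"
  proof -
    fix x :: complex assume h: "cmod x = 1"
    show "T x = x powi (if T = cnj then -1 else 1)"
    proof (cases "T = cnj")
      case True thus ?thesis using h by (simp add: cnj_inv power_int_minus)
    next
      case False thus ?thesis using T by simp
    qed
  qed
qed

lemma SF_iso:
  fixes u \<zeta> :: complex
  assumes u: "cmod u = 1" "\<forall>n>0. u^n \<noteq> 1" and z: "\<zeta>^m = 1" "m > 0" "\<forall>n. 0 < n \<and> n < m \<longrightarrow> \<zeta>^n \<noteq> 1"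
    and T: "T = (\<lambda>z. z) \<or> T = cnj"
  shows "top_group_iso (SF2 u (\<zeta> * T u)) (U1_times_C m)"
proof -
  note TP = T_props[OF T]
  define g where "g = (\<lambda>p::complex\<times>complex. (fst p, snd p * T (fst p)))"
  define f where "f = (\<lambda>p::complex\<times>complex. (fst p, snd p * cnj (T (fst p))))"
  define B where "B = U1_times_C m"
  define S where "S = {(u powi k, (\<zeta> * T u) powi k) | k :: int. True}"
  have Bdef: "B = sphere 0 1 \<times> {w. w^m = 1}" unfolding B_def U1_times_C_def by auto
  have finR: "finite {w::complex. w^m = 1}" using finite_roots_unity[of m] z(2) by simp
  have cB: "compact B" unfolding Bdef by (intro compact_Times compact_sphere finite_imp_compact finR)
  have contg: "continuous_on X g" for X
    using T by (auto simp: g_def intro!: continuous_intros)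
  have contf: "continuous_on X f" for X
    using T by (auto simp: f_def intro!: continuous_intros)
  have fg: "f (g b) = b" if bB: "b \<in> B" for b
  proof -
    obtain z1 w where b: "b = (z1, w)" and zn: "cmod z1 = 1" using bB unfolding Bdef by (cases b) auto
    have "cnj (T z1) * T z1 = 1" using TP(5)[of z1] complex_norm_square[of z1] zn by simp
    thus ?thesis unfolding f_def g_def b by (simp add: mult.assoc mult.commute)
  qed
  have gB: "g ` B \<subseteq> sphere 0 1 \<times> UNIV" unfolding g_def Bdef by auto
  have closed_gB: "closed (g ` B)" by (intro compact_imp_closed compact_continuous_image contg cB)
  have un: "cmod \<zeta> = 1" using power_eq_1_iff[OF z(1)] z(2) by simp
  have SsubgB: "S \<subseteq> g ` B"
  proof
    fix x assume "x \<in> S"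
    then obtain k where x: "x = (u powi k, (\<zeta> * T u) powi k)" unfolding S_def by blast
    have e: "(\<zeta> * T u) powi k = \<zeta> powi k * T (u powi k)"
      by (simp add: power_int_mult_distrib TP(3))
    have "cmod (u powi k) = 1" using u(1) by (simp add: norm_power_int)
    moreover have "(\<zeta> powi k)^m = 1"
    proof -
      have "(\<zeta> powi k)^m = (\<zeta> powi k) powi (int m)" by simp
      also have "\<dots> = \<zeta> powi (k * int m)" by (simp add: power_int_mult)
      also have "\<dots> = (\<zeta> powi (int m)) powi k" by (metis power_int_mult mult.commute)
      also have "\<dots> = 1" using z(1) by simp
      finally show ?thesis .
    qed
    ultimately have "(u powi k, \<zeta> powi k) \<in> B" unfolding Bdef by simp
    moreover have "x = g (u powi k, \<zeta> powi k)" unfolding x g_def e by simp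
    ultimately show "x \<in> g ` B" by blast
  qed
  have gBsub: "g ` B \<subseteq> closure S"
  proof
    fix x assume "x \<in> g ` B"
    then obtain zz w where x: "x = g (zz, w)" and zn: "cmod zz = 1" and w: "w^m = 1" unfolding Bdef by force
    obtain j where j: "j < m" "w = \<zeta>^j" using roots_eq[OF z] w by blast
    show "x \<in> closure S" unfolding closure_approachable
    proof (intro allI impI)
      fix e :: real assume e: "e > 0"
      define v where "v = u^m"
      have vn: "cmod v = 1" unfolding v_def using u(1) by (simp add: norm_power)
      have vr: "\<forall>n>0. v^n \<noteq> 1" unfolding v_def using u(2) z(2) by (simp add: power_mult[symmetric])
      define z' where "z' = zz * cnj u ^ j"
      have z'n: "cmod z' = 1" unfolding z'_def using zn u(1) by (simp add: norm_mult norm_power)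
      obtain k where k: "cmod (v^k - z') < e/2" using dense_powers[OF vn vr z'n, of "e/2"] e by auto
      define N where "N = j + m * k"
      have uc: "u * cnj u = 1" using complex_norm_square[of u] u(1) by simp
      have uN: "u^N = u^j * v^k" unfolding N_def v_def by (simp add: power_add power_mult)
      have "u^j * z' = zz * (u * cnj u)^j" unfolding z'_def by (simp add: power_mult_distrib ac_simps)
      hence uz: "u^j * z' = zz" using uc by simp
      have d1: "cmod (u^N - zz) < e/2"
      proof -
        have "u^N - zz = u^j * (v^k - z')" unfolding uN using uz by (simp add: algebra_simps)
        hence "cmod (u^N - zz) = cmod (v^k - z')" using u(1) by (simp add: norm_mult norm_power)
        thus ?thesis using k by simp
      qed
      have zN: "\<zeta>^N = \<zeta>^j" unfolding N_def using z(1) by (simp add: power_add power_mult)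
      have TN: "T u ^ N = T (u^N)" using TP(3)[of u "int N"] by simp
      define y where "y = (u powi int N, (\<zeta> * T u) powi int N)"
      have yS: "y \<in> S" unfolding y_def S_def by blast
      have y: "y = (u^N, \<zeta>^j * T (u^N))" unfolding y_def by (simp add: power_mult_distrib zN TN)
      have gx: "x = (zz, \<zeta>^j * T zz)" unfolding x g_def j(2) by simp
      have d2: "dist (\<zeta>^j * T (u^N)) (\<zeta>^j * T zz) = cmod (u^N - zz)"
      proof -
        have "dist (\<zeta>^j * T (u^N)) (\<zeta>^j * T zz) = cmod (\<zeta>^j * (T (u^N) - T zz))"
          by (simp add: dist_norm algebra_simps)
        also have "\<dots> = cmod (T (u^N) - T zz)" using un by (simp add: norm_mult norm_power)
        also have "\<dots> = cmod (u^N - zz)" by (simp add: TP(4) TP(2))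
        finally show ?thesis .
      qed
      have "dist y x = sqrt ((dist (u^N) zz)^2 + (dist (\<zeta>^j * T (u^N)) (\<zeta>^j * T zz))^2)"
        unfolding y gx by (rule dist_Pair_Pair)
      also have "\<dots> \<le> \<bar>dist (u^N) zz\<bar> + \<bar>dist (\<zeta>^j * T (u^N)) (\<zeta>^j * T zz)\<bar>"
        by (rule sqrt_sum_squares_le_sum_abs)
      also have "\<dots> = 2 * cmod (u^N - zz)" unfolding d2 by (simp add: dist_norm)
      also have "\<dots> < e" using d1 by simp
      finally show "\<exists>y\<in>S. dist y x < e" using yS by blast
    qed
  qed
  have A: "SF2 u (\<zeta> * T u) = g ` B"
  proof -
    have "SF2 u (\<zeta> * T u) = closure S" unfolding SF2_def S_def ..
    also have "\<dots> = g ` B"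
      using closure_minimal[OF SsubgB closed_gB] gBsub by blast
    finally show ?thesis .
  qed
  have hom: "homeomorphism (g ` B) B f g"
  proof (rule homeomorphismI)
    show "continuous_on (g ` B) f" by (rule contf)
    show "continuous_on B g" by (rule contg)
    show "f ` g ` B \<subseteq> B" using fg by auto
    show "g ` B \<subseteq> g ` B" by simp
    show "\<And>x. x \<in> g ` B \<Longrightarrow> g (f x) = x" using fg by auto
    show "\<And>y. y \<in> B \<Longrightarrow> f (g y) = y" using fg by auto
  qed
  have mul: "\<forall>x\<in>g ` B. \<forall>y\<in>g ` B. f (pmul x y) = pmul (f x) (f y)"
    unfolding f_def pmul_def by (simp add: TP(1) ac_simps)
  show ?thesis unfolding top_group_iso_def A B_def[symmetric] using hom mul by blast
qed

lemma powi_eq_1: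
  fixes u :: complex
  assumes u: "\<forall>n>0. u^n \<noteq> 1" and h: "u powi k = 1"
  shows "k = 0"
proof (rule ccontr)
  assume k: "k \<noteq> 0"
  show False
  proof (cases "k > 0")
    case True
    hence "u powi k = u ^ nat k" by (metis int_nat_eq less_le power_int_of_nat)
    thus False using u h True by auto
  next
    case False
    define n where "n = nat (-k)"
    have kn: "k = - int n" and pos: "n > 0" using k False unfolding n_def by auto
    have "u powi k = inverse (u ^ n)" unfolding kn by (simp add: power_int_minus)
    hence "u ^ n = 1" using h by (metis inverse_1 inverse_inverse_eq)
    thus False using u pos by auto
  qed
qed

lemma prod2: "(\<Prod>i::nat<2. h i) = (h 0 * h 1 :: complex)"
  by (simp add: numeral_2_eq_2)

lemma prod1: "(\<Prod>i::nat<1. h i) = (h 0 :: complex)"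
  by simp

lemma angle_rank:
  fixes u \<zeta> :: complex
  assumes u: "cmod u = 1" "\<forall>n>0. u^n \<noteq> 1" and z: "\<zeta>^m = 1" "m > 0"
    and T: "T = (\<lambda>z. z) \<or> T = cnj"
  shows "angle_rank_is [u, \<zeta> * T u] 1"
proof -
  note TP = T_props[OF T]
  define s :: int where "s = (if T = cnj then -1 else 1)"
  define u2 where "u2 = \<zeta> * T u"
  have u0: "u \<noteq> 0" using u by auto
  have u2s: "u2 = \<zeta> * u powi s" unfolding u2_def s_def using TP(7)[OF u(1)] by simp
  define G where "G = gen_mult_group [u, u2]"
  have memG: "\<exists>A. x powi int m = u powi (int m * A)" if x: "x \<in> G" for x
  proof -
    obtain k where xk: "x = (\<Prod>i<length [u, u2]. ([u, u2] ! i) powi (k i))"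
      using x unfolding G_def gen_mult_group_def by blast
    have "x = u powi (k 0) * u2 powi (k 1)" using xk by (simp add: prod2)
    also have "u2 powi (k 1) = \<zeta> powi (k 1) * u powi (s * k 1)"
      unfolding u2s by (simp add: power_int_mult_distrib power_int_mult)
    finally have "x = \<zeta> powi (k 1) * (u powi (k 0) * u powi (s * k 1))" by (simp add: ac_simps)
    also have "u powi (k 0) * u powi (s * k 1) = u powi (k 0 + s * k 1)"
      using u0 by (simp add: power_int_add)
    finally have xe: "x = \<zeta> powi (k 1) * u powi (k 0 + s * k 1)" .
    have "x powi int m = (\<zeta> powi (k 1)) powi int m * (u powi (k 0 + s * k 1)) powi int m"
      unfolding xe by (rule power_int_mult_distrib)
    also have "(\<zeta> powi (k 1)) powi int m = (\<zeta> powi int m) powi (k 1)"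
      by (metis power_int_mult mult.commute)
    also have "\<dots> = 1" using z(1) by simp
    also have "(u powi (k 0 + s * k 1)) powi int m = u powi (int m * (k 0 + s * k 1))"
      by (metis power_int_mult mult.commute)
    finally show ?thesis by auto
  qed
  have uG: "u \<in> G"
  proof -
    have "u = (\<Prod>i<length [u, u2]. ([u, u2] ! i) powi ((\<lambda>i. if i = 0 then 1 else 0) i))"
      by (simp add: prod2)
    thus ?thesis unfolding G_def gen_mult_group_def
      by (intro CollectI exI[of _ "\<lambda>i. if i = 0 then 1 else 0"]) simp
  qed
  have ind1: "mult_indep [u]"
    unfolding mult_indep_def using powi_eq_1[OF u(2)] by simp
  have no2: "\<not> (\<exists>xs. length xs = Suc 1 \<and> set xs \<subseteq> G \<and> mult_indep xs)"
  proof
    assume "\<exists>xs. length xs = Suc 1 \<and> set xs \<subseteq> G \<and> mult_indep xs"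
    then obtain xs where xs: "length xs = 2" "set xs \<subseteq> G" "mult_indep xs"
      by (metis Suc_1)
    then obtain x y where xy: "xs = [x, y]"
      by (metis (no_types, lifting) One_nat_def Suc_1 length_0_conv length_Suc_conv)
    have xG: "x \<in> G" and yG: "y \<in> G" using xs(2) xy by auto
    have ind: "k 0 = 0 \<and> k 1 = 0" if kk: "x powi (k 0) * y powi (k 1) = 1" for k :: "nat \<Rightarrow> int"
    proof -
      have "(\<Prod>i<length [x, y]. ([x, y] ! i) powi (k i)) = 1" using kk by (simp add: prod2)
      hence "\<forall>i<length [x,y]. k i = 0" using xs(3) unfolding xy mult_indep_def by blast
      thus ?thesis by simp
    qed
    obtain A where A: "x powi int m = u powi (int m * A)" using memG[OF xG] by blast
    obtain C where C: "y powi int m = u powi (int m * C)" using memG[OF yG] by blast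
    show False
    proof (cases "A = 0 \<and> C = 0")
      case True
      define k :: "nat \<Rightarrow> int" where "k = (\<lambda>i. if i = 0 then int m else 0)"
      have "x powi (k 0) * y powi (k 1) = 1" unfolding k_def using A True by simp
      hence "k 0 = 0" using ind by blast
      thus False using z(2) unfolding k_def by simp
    next
      case False
      define k :: "nat \<Rightarrow> int" where "k = (\<lambda>i. if i = 0 then int m * C else - (int m * A))"
      have "x powi (k 0) = u powi (int m * A * C)"
        unfolding k_def using A by (simp add: power_int_mult)
      moreover have "y powi (k 1) = u powi (- (int m * A * C))"
      proof -
        have "y powi (k 1) = y powi (int m * (- A))" unfolding k_def by simp
        also have "\<dots> = (y powi int m) powi (- A)" by (rule power_int_mult)
        also have "\<dots> = (u powi (int m * C)) powi (- A)" unfolding C ..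
        also have "\<dots> = u powi (int m * C * (- A))" by (rule power_int_mult[symmetric])
        finally show ?thesis by (simp add: ac_simps)
      qed
      ultimately have "x powi (k 0) * y powi (k 1) = 1"
        using u0 by (simp add: power_int_minus)
      hence "k 0 = 0 \<and> k 1 = 0" by (rule ind)
      thus False using False z(2) unfolding k_def by simp
    qed
  qed
  show ?thesis unfolding angle_rank_is_def has_rank_def u2_def[symmetric] G_def[symmetric]
    using uG ind1 no2 by (intro conjI exI[of _ "[u]"]) auto
qed

lemma fun_logic: "a \<in> {c, d} \<Longrightarrow> b \<in> {c, d} \<Longrightarrow> c \<in> {a, b} \<Longrightarrow> d \<in> {a, b} \<Longrightarrow> (a n = b n \<longleftrightarrow> c n = d n)"
  by auto

lemma poly_prod: "poly (map_poly of_int (frob_poly a1 q * frob_poly a2 q)) (x::complex)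
   = poly (map_poly of_int (frob_poly a1 q)) x * poly (map_poly of_int (frob_poly a2 q)) x"
  by (simp add: frob_poly_def map_poly_pCons algebra_simps)

lemma poly_factor: "ordq a q \<alpha> \<Longrightarrow> poly (map_poly of_int (frob_poly a q)) x = (x - \<alpha>) * (x - cnj \<alpha>)"
proof -
  assume h: "ordq a q \<alpha>"
  have "(x - \<alpha>) * (x - cnj \<alpha>) = x^2 - (\<alpha> + cnj \<alpha>) * x + \<alpha> * cnj \<alpha>"
    by (simp add: algebra_simps power2_eq_square)
  also have "\<dots> = x^2 - of_int a * x + of_nat q" using h unfolding ordq_def by simp
  finally show ?thesis unfolding poly_frob by simp
qed

theorem lemma4p4:
  fixes p d q :: nat and a1 a2 :: int and \<alpha>1 \<alpha>2 \<beta>1 \<beta>2 :: complex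
    and PS :: "int poly" and m :: nat
  assumes "prime p" and "d \<ge> 1" and "q = p ^ d"
    \<comment> \<open>E1, E2: elliptic curves over F_q with traces a1, a2 (Weil bound), ordinary\<close>
    and "a1\<^sup>2 \<le> 4 * int q" and "a2\<^sup>2 \<le> 4 * int q"
    and "\<not> int p dvd a1" and "\<not> int p dvd a2"
    and "poly (map_poly of_int (frob_poly a1 q)) \<alpha>1 = 0"
    and "poly (map_poly of_int (frob_poly a2 q)) \<alpha>2 = 0"
    \<comment> \<open>E1, E2 isogenous over the algebraic closure\<close>
    and "\<exists>n>0. isogenous_over_ext \<alpha>1 \<alpha>2 n"
    \<comment> \<open>m minimal with E1, E2 isogenous over F_(q^m)\<close>
    and "m > 0" and "isogenous_over_ext \<alpha>1 \<alpha>2 m"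
    and "\<forall>n. 0 < n \<and> n < m \<longrightarrow> \<not> isogenous_over_ext \<alpha>1 \<alpha>2 n"
    \<comment> \<open>S isogenous to E1 x E2: P_S = P_E1 P_E2; its Frobenius roots are b1, b2 and conjugates\<close>
    and "PS = frob_poly a1 q * frob_poly a2 q"
    and "map_poly of_int PS =
           [:- \<beta>1, 1:] * [:- \<beta>2, 1:] * [:- cnj \<beta>1, 1:] * [:- cnj \<beta>2, 1:]"
  shows "m \<in> {1, 2, 3, 4, 6}
       \<and> angle_rank_is [\<beta>1 / complex_of_real (sqrt (real q)), \<beta>2 / complex_of_real (sqrt (real q))] 1
       \<and> top_group_iso (SF2 (\<beta>1 / complex_of_real (sqrt (real q))) (\<beta>2 / complex_of_real (sqrt (real q))))
                       (U1_times_C m)"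
proof -
  have o1: "ordq a1 q \<alpha>1" unfolding ordq_def using ordinary_root[OF assms(1,2,3,4,6,8)] by blast
  have o2: "ordq a2 q \<alpha>2" unfolding ordq_def using ordinary_root[OF assms(1,2,3,5,7,9)] by blast
  have qpos: "q > 0" using assms(1,3) by (simp add: prime_gt_0_nat)
  have R: "(x - \<alpha>1) * (x - cnj \<alpha>1) * ((x - \<alpha>2) * (x - cnj \<alpha>2))
         = (x - \<beta>1) * (x - \<beta>2) * (x - cnj \<beta>1) * (x - cnj \<beta>2)" for x
  proof -
    have "(x - \<alpha>1) * (x - cnj \<alpha>1) * ((x - \<alpha>2) * (x - cnj \<alpha>2)) = poly (map_poly of_int PS) x"
      unfolding assms(14) poly_prod poly_factor[OF o1] poly_factor[OF o2] ..
    also have "\<dots> = (x - \<beta>1) * (x - \<beta>2) * (x - cnj \<beta>1) * (x - cnj \<beta>2)"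
      unfolding assms(15) by (simp add: algebra_simps)
    finally show ?thesis .
  qed
  have inA: "x \<in> {\<alpha>1, cnj \<alpha>1, \<alpha>2, cnj \<alpha>2}" if "x = \<beta>1 \<or> x = \<beta>2" for x
  proof -
    have "(x - \<alpha>1) * (x - cnj \<alpha>1) * ((x - \<alpha>2) * (x - cnj \<alpha>2)) = 0" using R[of x] that by auto
    thus ?thesis by auto
  qed
  have inB: "x \<in> {\<beta>1, \<beta>2, cnj \<beta>1, cnj \<beta>2}" if "x = \<alpha>1 \<or> x = \<alpha>2" for x
  proof -
    have "(x - \<beta>1) * (x - \<beta>2) * (x - cnj \<beta>1) * (x - cnj \<beta>2) = 0" using R[of x] that by auto
    thus ?thesis by auto
  qed
  define S where "S = (\<lambda>x n. frob_poly_ext x n)"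
  have Sc: "S (cnj x) = S x" for x unfolding S_def by (simp add: fun_eq_iff fpe_cnj)
  have iso_S: "isogenous_over_ext x y n \<longleftrightarrow> S x n = S y n" for x y n
    unfolding S_def isogenous_over_ext_def ..
  have Sb1: "S \<beta>1 \<in> {S \<alpha>1, S \<alpha>2}" using inA[of \<beta>1] Sc by auto
  have Sb2: "S \<beta>2 \<in> {S \<alpha>1, S \<alpha>2}" using inA[of \<beta>2] Sc by auto
  have Sa1: "S \<alpha>1 \<in> {S \<beta>1, S \<beta>2}"
  proof -
    have "\<alpha>1 \<in> {\<beta>1, \<beta>2, cnj \<beta>1, cnj \<beta>2}" using inB by blast
    hence "\<alpha>1 = \<beta>1 \<or> \<alpha>1 = \<beta>2 \<or> \<alpha>1 = cnj \<beta>1 \<or> \<alpha>1 = cnj \<beta>2" by simp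
    hence "S \<alpha>1 = S \<beta>1 \<or> S \<alpha>1 = S \<beta>2" using Sc by auto
    thus ?thesis by simp
  qed
  have Sa2: "S \<alpha>2 \<in> {S \<beta>1, S \<beta>2}"
  proof -
    have "\<alpha>2 \<in> {\<beta>1, \<beta>2, cnj \<beta>1, cnj \<beta>2}" using inB by blast
    hence "\<alpha>2 = \<beta>1 \<or> \<alpha>2 = \<beta>2 \<or> \<alpha>2 = cnj \<beta>1 \<or> \<alpha>2 = cnj \<beta>2" by simp
    hence "S \<alpha>2 = S \<beta>1 \<or> S \<alpha>2 = S \<beta>2" using Sc by auto
    thus ?thesis by simp
  qed
  have isoeq: "isogenous_over_ext \<beta>1 \<beta>2 n \<longleftrightarrow> isogenous_over_ext \<alpha>1 \<alpha>2 n" for n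
    unfolding iso_S using fun_logic[OF Sb1 Sb2 Sa1 Sa2] .
  have ob: "\<exists>b. ordq b q x" if "x = \<beta>1 \<or> x = \<beta>2" for x
  proof -
    have "x \<in> {\<alpha>1, cnj \<alpha>1, \<alpha>2, cnj \<alpha>2}" using inA that by blast
    thus ?thesis using o1 o2 ordq_cnj by auto
  qed
  obtain b1 where ob1: "ordq b1 q \<beta>1" using ob by blast
  obtain b2 where ob2: "ordq b2 q \<beta>2" using ob by blast
  have core': "m \<in> {1,2,3,4,6} \<and> (\<exists>\<zeta> \<gamma>. (\<gamma> = \<beta>1 \<or> \<gamma> = cnj \<beta>1) \<and> \<beta>2 = \<zeta> * \<gamma> \<and> \<zeta>^m = 1
          \<and> (\<forall>n. 0 < n \<and> n < m \<longrightarrow> \<zeta>^n \<noteq> 1))"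
    by (rule core[OF ob1 ob2 qpos assms(11)]) (use assms(12,13) isoeq in auto)
  then obtain \<zeta> \<gamma> where mset: "m \<in> {1,2,3,4,6}" and g: "\<gamma> = \<beta>1 \<or> \<gamma> = cnj \<beta>1" and b2: "\<beta>2 = \<zeta> * \<gamma>"
    and zm: "\<zeta>^m = 1" and zmin: "\<forall>n. 0 < n \<and> n < m \<longrightarrow> \<zeta>^n \<noteq> 1" by blast
  define sq where "sq = complex_of_real (sqrt (real q))"
  have sq0: "sq \<noteq> 0" unfolding sq_def using qpos by simp
  have csq: "cnj sq = sq" unfolding sq_def by simp
  define u where "u = \<beta>1 / sq"
  have nb: "cmod \<beta>1 = sqrt (real q)"
  proof -
    have "complex_of_real (cmod \<beta>1 ^ 2) = of_nat q" using complex_norm_square[of \<beta>1] ob1 unfolding ordq_def by simp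
    hence "cmod \<beta>1 ^ 2 = real q" by (metis of_real_eq_iff of_real_of_nat_eq)
    thus ?thesis by (metis norm_ge_zero real_sqrt_unique)
  qed
  have un: "cmod u = 1" unfolding u_def sq_def using nb qpos by (simp add: norm_divide)
  have ur: "\<forall>n>0. u^n \<noteq> 1"
  proof (intro allI impI notI)
    fix n :: nat assume n: "n > 0" and h: "u^n = 1"
    have "\<beta>1^n = sq^n" using h sq0 unfolding u_def by (simp add: power_divide)
    moreover have "cnj \<beta>1 ^ n = sq^n" using h sq0 csq unfolding u_def
      by (metis calculation complex_cnj_power)
    ultimately have "\<beta>1^n = cnj \<beta>1^n" by simp
    thus False using ob1 n unfolding ordq_def by blast
  qed
  obtain T where T: "T = (\<lambda>z. z) \<or> T = cnj" and u2: "\<beta>2 / sq = \<zeta> * T u"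
  proof (cases "\<gamma> = \<beta>1")
    case True
    show ?thesis by (rule that[of "\<lambda>z. z"]) (simp_all add: b2 True u_def)
  next
    case False
    hence "\<gamma> = cnj \<beta>1" using g by blast
    show ?thesis by (rule that[of cnj]) (simp_all add: b2 \<open>\<gamma> = cnj \<beta>1\<close> u_def csq)
  qed
  have ar: "angle_rank_is [u, \<zeta> * T u] 1" using angle_rank[OF un ur zm assms(11) T] .
  have sf: "top_group_iso (SF2 u (\<zeta> * T u)) (U1_times_C m)" using SF_iso[OF un ur zm assms(11) zmin T] .
  have "angle_rank_is [u, \<beta>2 / sq] 1" using ar by (simp only: u2)
  hence ar': "angle_rank_is [\<beta>1 / sq, \<beta>2 / sq] 1" unfolding u_def .
  have "top_group_iso (SF2 u (\<beta>2 / sq)) (U1_times_C m)" using sf by (simp only: u2)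
  hence sf': "top_group_iso (SF2 (\<beta>1 / sq) (\<beta>2 / sq)) (U1_times_C m)" unfolding u_def .
  show ?thesis using mset ar' sf' unfolding sq_def by blast
qed

end
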